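(* Every quaternary matrix $M$ that contains a cycle of length at least $6$ contains a $2\times 2$, $2\times 3$, or $3\times 2$ submatrix that is not a weak lonesum matrix.
   Context: A quaternary matrix has entries in $\{0,1,2,3\}$; a $q$-ary matrix has entries in $\{0,\ldots,q-1\}$. The structure vector of a $q$-ary vector $v=(v_1,\ldots,v_n)$ is $(a_0,\ldots,a_{q-1})$ with $a_k=|\{i: v_i=k\}|$. A $q$-ary $m\times n$ matrix is a weak lonesum matrix if no other $q$-ary $m\times n$ matrix has the same row structure vectors and column structure vectors. In a matrix $M$, a path is a sequence $(M_{i_1,j_1},\ldots,M_{i_k,j_k})$ of entries at pairwise distinct positions such that: (1) for each $l\le k-1$, $i_l=i_{l+1}$ or $j_l=j_{l+1}$; (2) for each $l\le k-2$, $|\{i_l,i_{l+1},i_{l+2}\}|\ge2$ and $|\{j_l,j_{l+1},j_{l+2}\}|\ge 2$; (3) there are two distinct values $a,b$ with the entries' values being $(a,b,a,b,\ldots)$ alternating. The path is a cycle of length $k$ if, setting $(i_{k+1},j_{k+1})=(i_1,j_1)$ and $(i_{k+2},j_{k+2})=(i_2,j_2)$, the extended sequence of $k+2$ entries also satisfies conditions (1)–(3). A submatrix is formed by the entries in the intersection of chosen rows and chosen columns. *)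

theory Defs
  imports Main
begin

(* An m x n matrix is a function nat => nat => nat, only entries (i,j) with i<m, j<n matter. *)

definition q_ary_matrix :: "nat \<Rightarrow> nat \<Rightarrow> nat \<Rightarrow> (nat \<Rightarrow> nat \<Rightarrow> nat) \<Rightarrow> bool" where
  "q_ary_matrix q m n M \<longleftrightarrow> (\<forall>i<m. \<forall>j<n. M i j < q)"

definition row_struct :: "nat \<Rightarrow> nat \<Rightarrow> (nat \<Rightarrow> nat \<Rightarrow> nat) \<Rightarrow> nat \<Rightarrow> nat list" where
  "row_struct q n M i = map (\<lambda>k. card {j. j < n \<and> M i j = k}) [0..<q]"

definition col_struct :: "nat \<Rightarrow> nat \<Rightarrow> (nat \<Rightarrow> nat \<Rightarrow> nat) \<Rightarrow> nat \<Rightarrow> nat list" where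
  "col_struct q m M j = map (\<lambda>k. card {i. i < m \<and> M i j = k}) [0..<q]"

definition weak_lonesum :: "nat \<Rightarrow> nat \<Rightarrow> nat \<Rightarrow> (nat \<Rightarrow> nat \<Rightarrow> nat) \<Rightarrow> bool" where
  "weak_lonesum q m n M \<longleftrightarrow> q_ary_matrix q m n M \<and>
     (\<forall>N. q_ary_matrix q m n N
        \<and> (\<forall>i<m. row_struct q n N i = row_struct q n M i)
        \<and> (\<forall>j<n. col_struct q m N j = col_struct q m M j)
        \<longrightarrow> (\<forall>i<m. \<forall>j<n. N i j = M i j))"

definition path_conds :: "(nat \<Rightarrow> nat \<Rightarrow> nat) \<Rightarrow> (nat \<times> nat) list \<Rightarrow> bool" where
  "path_conds M ps \<longleftrightarrow>
     (\<forall>l. l + 1 < length ps \<longrightarrow>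
        fst (ps!l) = fst (ps!(l+1)) \<or> snd (ps!l) = snd (ps!(l+1))) \<and>
     (\<forall>l. l + 2 < length ps \<longrightarrow>
        card {fst (ps!l), fst (ps!(l+1)), fst (ps!(l+2))} \<ge> 2 \<and>
        card {snd (ps!l), snd (ps!(l+1)), snd (ps!(l+2))} \<ge> 2) \<and>
     (\<exists>a b. a \<noteq> b \<and> (\<forall>l<length ps.
        M (fst (ps!l)) (snd (ps!l)) = (if even l then a else b)))"

definition is_path :: "nat \<Rightarrow> nat \<Rightarrow> (nat \<Rightarrow> nat \<Rightarrow> nat) \<Rightarrow> (nat \<times> nat) list \<Rightarrow> bool" where
  "is_path m n M ps \<longleftrightarrow> distinct ps \<and> (\<forall>p\<in>set ps. fst p < m \<and> snd p < n) \<and> path_conds M ps"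

definition is_cycle :: "nat \<Rightarrow> nat \<Rightarrow> (nat \<Rightarrow> nat \<Rightarrow> nat) \<Rightarrow> (nat \<times> nat) list \<Rightarrow> bool" where
  "is_cycle m n M ps \<longleftrightarrow> is_path m n M ps \<and> length ps \<ge> 2 \<and>
     path_conds M (ps @ [ps!0, ps!1])"

definition submatrix :: "(nat \<Rightarrow> nat \<Rightarrow> nat) \<Rightarrow> nat list \<Rightarrow> nat list \<Rightarrow> (nat \<Rightarrow> nat \<Rightarrow> nat)" where
  "submatrix M rs cs = (\<lambda>i j. M (rs!i) (cs!j))"

definition valid_sub_indices :: "nat \<Rightarrow> nat \<Rightarrow> nat list \<Rightarrow> nat list \<Rightarrow> bool" where
  "valid_sub_indices m n rs cs \<longleftrightarrow> sorted_wrt (<) rs \<and> sorted_wrt (<) cs \<and>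
     (\<forall>i\<in>set rs. i < m) \<and> (\<forall>j\<in>set cs. j < n)"

end

theory Submission
  imports Defs
begin


definition BAD :: "nat \<Rightarrow> nat \<Rightarrow> (nat \<Rightarrow> nat \<Rightarrow> nat) \<Rightarrow> bool" where
  "BAD m n M \<longleftrightarrow> (\<exists>rs cs. valid_sub_indices m n rs cs \<and>
           (length rs, length cs) \<in> {(2,2), (2,3), (3,2)} \<and>
           \<not> weak_lonesum 4 (length rs) (length cs) (submatrix M rs cs))"

lemma card_idx:
  assumes "distinct xs"
  shows "card {j. j < length xs \<and> P (xs!j)} = card {x\<in>set xs. P x}"
proof -
  have "bij_betw (nth xs) {j. j < length xs \<and> P (xs!j)} {x\<in>set xs. P x}"
    unfolding bij_betw_def
  proof
    show "inj_on ((!) xs) {j. j < length xs \<and> P (xs ! j)}"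
      using assms by (intro inj_on_nth) auto
    show "(!) xs ` {j. j < length xs \<and> P (xs ! j)} = {x \<in> set xs. P x}"
      by (auto simp: in_set_conv_nth)
  qed
  then show ?thesis by (rule bij_betw_same_card)
qed

lemma sorted_list_ex:
  fixes X :: "nat set"
  assumes "finite X"
  obtains xs where "sorted_wrt (<) xs" "set xs = X" "distinct xs" "length xs = card X"
proof -
  obtain xs where xs: "sorted_wrt (<) xs" "set xs = X"
    using ex1_sorted_list_for_set_if_finite[OF assms] by blast
  have d: "distinct xs" using xs(1) by (simp add: strict_sorted_iff)
  then have "length xs = card X" using xs(2) distinct_card by fastforce
  then show ?thesis using that xs d by blast
qed

lemma notlone_set:
  assumes fin: "finite Rs" "finite Cs"
    and dims: "(card Rs, card Cs) \<in> {(2,2),(2,3),(3,2)}"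
    and bnd: "\<forall>r\<in>Rs. r<m" "\<forall>c\<in>Cs. c<n"
    and q: "\<forall>r\<in>Rs. \<forall>c\<in>Cs. Nx r c < 4"
    and rows: "\<forall>r\<in>Rs. \<forall>k. card {c\<in>Cs. Nx r c = k} = card {c\<in>Cs. M r c = k}"
    and cols: "\<forall>c\<in>Cs. \<forall>k. card {r\<in>Rs. Nx r c = k} = card {r\<in>Rs. M r c = k}"
    and diff: "rz\<in>Rs" "cz\<in>Cs" "Nx rz cz \<noteq> M rz cz"
  shows "BAD m n M"
proof -
  obtain rs where rs: "sorted_wrt (<) rs" "set rs = Rs" "distinct rs" "length rs = card Rs"
    using sorted_list_ex[OF fin(1)] by blast
  obtain cs where cs: "sorted_wrt (<) cs" "set cs = Cs" "distinct cs" "length cs = card Cs"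
    using sorted_list_ex[OF fin(2)] by blast
  define N where "N = (\<lambda>i j. Nx (rs!i) (cs!j))"
  have "\<not> weak_lonesum 4 (length rs) (length cs) (submatrix M rs cs)"
  proof
    assume wl: "weak_lonesum 4 (length rs) (length cs) (submatrix M rs cs)"
    have qN: "q_ary_matrix 4 (length rs) (length cs) N"
      unfolding q_ary_matrix_def N_def using q rs cs by (auto)
    have rN: "\<forall>i<length rs. row_struct 4 (length cs) N i = row_struct 4 (length cs) (submatrix M rs cs) i"
    proof (intro allI impI)
      fix i assume i: "i < length rs"
      then have ri: "rs!i \<in> Rs" using rs by auto
      have "card {j. j < length cs \<and> N i j = k} = card {j. j < length cs \<and> submatrix M rs cs i j = k}" for k
      proof -
        have "card {j. j < length cs \<and> N i j = k} = card {c\<in>Cs. Nx (rs!i) c = k}"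
          unfolding N_def using card_idx[OF cs(3), of "\<lambda>c. Nx (rs!i) c = k"] cs(2) by simp
        also have "\<dots> = card {c\<in>Cs. M (rs!i) c = k}" using rows ri by blast
        also have "\<dots> = card {j. j < length cs \<and> submatrix M rs cs i j = k}"
          unfolding submatrix_def using card_idx[OF cs(3), of "\<lambda>c. M (rs!i) c = k"] cs(2) by simp
        finally show ?thesis .
      qed
      then show "row_struct 4 (length cs) N i = row_struct 4 (length cs) (submatrix M rs cs) i"
        unfolding row_struct_def by simp
    qed
    have cN: "\<forall>j<length cs. col_struct 4 (length rs) N j = col_struct 4 (length rs) (submatrix M rs cs) j"
    proof (intro allI impI)
      fix j assume j: "j < length cs"
      then have cj: "cs!j \<in> Cs" using cs by auto
      have "card {i. i < length rs \<and> N i j = k} = card {i. i < length rs \<and> submatrix M rs cs i j = k}" for k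
      proof -
        have "card {i. i < length rs \<and> N i j = k} = card {r\<in>Rs. Nx r (cs!j) = k}"
          unfolding N_def using card_idx[OF rs(3), of "\<lambda>r. Nx r (cs!j) = k"] rs(2) by simp
        also have "\<dots> = card {r\<in>Rs. M r (cs!j) = k}" using cols cj by blast
        also have "\<dots> = card {i. i < length rs \<and> submatrix M rs cs i j = k}"
          unfolding submatrix_def using card_idx[OF rs(3), of "\<lambda>r. M r (cs!j) = k"] rs(2) by simp
        finally show ?thesis .
      qed
      then show "col_struct 4 (length rs) N j = col_struct 4 (length rs) (submatrix M rs cs) j"
        unfolding col_struct_def by simp
    qed
    have eq: "\<forall>i<length rs. \<forall>j<length cs. N i j = submatrix M rs cs i j"
      using wl qN rN cN unfolding weak_lonesum_def by blast
    obtain i where i: "i < length rs" "rs!i = rz" using diff(1) rs(2) by (metis in_set_conv_nth)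
    obtain j where j: "j < length cs" "cs!j = cz" using diff(2) cs(2) by (metis in_set_conv_nth)
    show False using eq i j diff(3) unfolding N_def submatrix_def by auto
  qed
  moreover have "valid_sub_indices m n rs cs"
    unfolding valid_sub_indices_def using rs cs bnd by auto
  ultimately show ?thesis unfolding BAD_def
    by (intro exI[of _ rs] exI[of _ cs]) (use dims rs cs in auto)
qed



lemma card2: assumes "x\<noteq>y" shows "card {c\<in>{x,y}. P c} = of_bool (P x) + of_bool (P y)"
proof -
  have "{c\<in>{x,y}. P c} = (if P x then {x} else {}) \<union> (if P y then {y} else {})" by auto
  then show ?thesis using assms by (cases "P x"; cases "P y") simp_all
qed

lemma card3: assumes "x\<noteq>y" "x\<noteq>z" "y\<noteq>z" shows
   "card {c\<in>{x,y,z}. P c} = of_bool (P x) + of_bool (P y) + of_bool (P z)"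
proof -
  have "{c\<in>{x,y,z}. P c} = (if P x then {x} else {}) \<union> (if P y then {y} else {}) \<union> (if P z then {z} else {})" by auto
  then show ?thesis using assms by (cases "P x"; cases "P y"; cases "P z") simp_all
qed

lemma switch_bad:
  assumes "r1\<noteq>r2" "c1\<noteq>c2" "r1<m" "r2<m" "c1<n" "c2<n"
    "M r1 c1 = p" "M r2 c2 = p" "M r1 c2 = q" "M r2 c1 = q" "p\<noteq>q" "p<4" "q<4"
  shows "BAD m n M"
proof (rule notlone_set[where Rs="{r1,r2}" and Cs="{c1,c2}" and Nx="\<lambda>r c. if M r c = p then q else p" and rz=r1 and cz=c1])
  show "\<forall>r\<in>{r1, r2}. \<forall>k. card {c \<in> {c1, c2}. (if M r c = p then q else p) = k} = card {c \<in> {c1, c2}. M r c = k}"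
    using assms by (simp only: card2[OF assms(2)]) auto
  show "\<forall>c\<in>{c1, c2}. \<forall>k. card {r \<in> {r1, r2}. (if M r c = p then q else p) = k} = card {r \<in> {r1, r2}. M r c = k}"
    using assms by (simp only: card2[OF assms(1)]) auto
qed (use assms in auto)

lemma p23_bad:
  assumes "r1\<noteq>r2" "c1\<noteq>c2" "c1\<noteq>c3" "c2\<noteq>c3" "r1<m" "r2<m" "c1<n" "c2<n" "c3<n"
    "M r1 c1 = a" "M r1 c2 = b" "M r1 c3 = x" "M r2 c1 = x" "M r2 c2 = a" "M r2 c3 = b"
    "x \<noteq> a" "a<4" "b<4" "x<4"
  shows "BAD m n M"
proof (rule notlone_set[where Rs="{r1,r2}" and Cs="{c1,c2,c3}" and rz=r1 and cz=c1 and
     Nx="\<lambda>r c. if r = r1 then (if c=c1 then x else if c = c2 then a else b)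
                 else (if c=c1 then a else if c=c2 then b else x)"])
  show "\<forall>r\<in>{r1, r2}. \<forall>k. card {c \<in> {c1, c2, c3}. (if r = r1 then (if c=c1 then x else if c = c2 then a else b)
                 else (if c=c1 then a else if c=c2 then b else x)) = k} = card {c \<in> {c1, c2, c3}. M r c = k}"
    using assms by (simp only: card3[OF assms(2,3,4)]) auto
  show "\<forall>c\<in>{c1, c2, c3}. \<forall>k. card {r \<in> {r1, r2}. (if r = r1 then (if c=c1 then x else if c = c2 then a else b)
                 else (if c=c1 then a else if c=c2 then b else x)) = k} = card {r \<in> {r1, r2}. M r c = k}"
    using assms by (simp only: card2[OF assms(1)]) auto
qed (use assms in \<open>auto simp: card_insert_if\<close>)

lemma p32_bad:
  assumes "r1\<noteq>r2" "r1\<noteq>r3" "r2\<noteq>r3" "c1\<noteq>c2" "r1<m" "r2<m" "r3<m" "c1<n" "c2<n"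
    "M r1 c1 = b" "M r1 c2 = x" "M r2 c1 = a" "M r2 c2 = b" "M r3 c1 = x" "M r3 c2 = a"
    "x \<noteq> b" "a<4" "b<4" "x<4"
  shows "BAD m n M"
proof (rule notlone_set[where Rs="{r1,r2,r3}" and Cs="{c1,c2}" and rz=r1 and cz=c1 and
     Nx="\<lambda>r c. if c = c1 then (if r=r1 then x else if r = r2 then b else a)
                 else (if r=r1 then b else if r=r2 then a else x)"])
  show "\<forall>r\<in>{r1, r2, r3}. \<forall>k. card {c \<in> {c1, c2}. (if c = c1 then (if r=r1 then x else if r = r2 then b else a)
                 else (if r=r1 then b else if r=r2 then a else x)) = k} = card {c \<in> {c1, c2}. M r c = k}"
    using assms by (simp only: card2[OF assms(4)]) auto
  show "\<forall>c\<in>{c1, c2}. \<forall>k. card {r \<in> {r1, r2, r3}. (if c = c1 then (if r=r1 then x else if r = r2 then b else a)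
                 else (if r=r1 then b else if r=r2 then a else x)) = k} = card {r \<in> {r1, r2, r3}. M r c = k}"
    using assms by (simp only: card3[OF assms(1,2,3)]) auto
qed (use assms in \<open>auto simp: card_insert_if\<close>)



definition walk :: "nat \<Rightarrow> nat \<Rightarrow> (nat\<Rightarrow>nat\<Rightarrow>nat) \<Rightarrow> nat \<Rightarrow> nat \<Rightarrow> nat \<Rightarrow> (nat\<Rightarrow>nat) \<Rightarrow> (nat\<Rightarrow>nat) \<Rightarrow> bool" where
  "walk m n M a b L R C \<longleftrightarrow> 2 \<le> L \<and>
     (\<forall>i<L. R i < m \<and> C i < n \<and> M (R i) (C i) = a \<and> M (R i) (C (Suc i mod L)) = b)"

lemma walk_rot:
  assumes "walk m n M a b L R C"
  shows "walk m n M a b L (\<lambda>t. R ((t+s) mod L)) (\<lambda>t. C ((t+s) mod L))"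
proof -
  have L: "L > 0" using assms unfolding walk_def by auto
  have e: "(Suc i mod L + s) mod L = Suc ((i + s) mod L) mod L" for i
    by (metis add_Suc mod_Suc_eq mod_add_left_eq)
  show ?thesis using assms L unfolding walk_def by (auto simp: e)
qed

lemma walk_short_a:
  assumes w: "walk m n M a b L R C" and j: "0 < j" "j < L" and v: "M (R 0) (C j) = a" and ab: "a \<noteq> b"
  shows "walk m n M a b j R (\<lambda>t. if t = 0 then C j else C t)"
proof -
  have L2: "2 \<le> L" and W: "\<forall>i<L. R i < m \<and> C i < n \<and> M (R i) (C i) = a \<and> M (R i) (C (Suc i mod L)) = b"
    using w unfolding walk_def by auto
  have "j \<noteq> 1"
  proof
    assume "j = 1"
    then have "M (R 0) (C (Suc 0 mod L)) = b" using W j by auto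
    moreover have "Suc 0 mod L = 1" using L2 by simp
    ultimately show False using v ab \<open>j=1\<close> by simp
  qed
  then have j2: "2 \<le> j" using j by simp
  have "\<forall>t<j. R t < m \<and> (if t = 0 then C j else C t) < n \<and>
        M (R t) (if t = 0 then C j else C t) = a \<and>
        M (R t) (if Suc t mod j = 0 then C j else C (Suc t mod j)) = b"
  proof (intro allI impI)
    fix t assume t: "t < j"
    have a1: "R t < m \<and> (if t = 0 then C j else C t) < n \<and> M (R t) (if t = 0 then C j else C t) = a"
      using W t j v by auto
    have a2: "M (R t) (if Suc t mod j = 0 then C j else C (Suc t mod j)) = b"
    proof (cases "Suc t = j")
      case True
      have "t < L" using t j by simp
      then have "M (R t) (C (Suc t mod L)) = b" using W by blast
      moreover have "Suc t mod L = Suc t" using True j by simp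
      ultimately show ?thesis using True j by simp
    next
      case False
      then have st: "Suc t < j" using t by simp
      then have e: "Suc t mod j = Suc t" "Suc t mod L = Suc t" using j by auto
      have "t < L" using t j by simp
      then have "M (R t) (C (Suc t mod L)) = b" using W by blast
      then show ?thesis using e by simp
    qed
    show "R t < m \<and> (if t = 0 then C j else C t) < n \<and>
        M (R t) (if t = 0 then C j else C t) = a \<and>
        M (R t) (if Suc t mod j = 0 then C j else C (Suc t mod j)) = b" using a1 a2 by blast
  qed
  then show ?thesis unfolding walk_def using j2 by simp
qed

lemma walk_short_b:
  assumes w: "walk m n M a b L R C" and i: "0 < i" "Suc i < L" and v: "M (R i) (C 0) = b"
  shows "walk m n M a b (Suc i) R C"
proof -
  have W: "\<forall>i<L. R i < m \<and> C i < n \<and> M (R i) (C i) = a \<and> M (R i) (C (Suc i mod L)) = b"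
    using w unfolding walk_def by auto
  have "\<forall>t<Suc i. R t < m \<and> C t < n \<and> M (R t) (C t) = a \<and> M (R t) (C (Suc t mod Suc i)) = b"
  proof (intro allI impI)
    fix t assume t: "t < Suc i"
    show "R t < m \<and> C t < n \<and> M (R t) (C t) = a \<and> M (R t) (C (Suc t mod Suc i)) = b"
    proof (cases "t = i")
      case True then show ?thesis using W v i by auto
    next
      case False
      then have "Suc t < Suc i" using t by simp
      then have "Suc t mod Suc i = Suc t" "Suc t mod L = Suc t" using i by auto
      then show ?thesis using W t i by (metis less_trans_Suc Suc_lessD)
    qed
  qed
  then show ?thesis unfolding walk_def using i by simp
qed

lemma modne: "0 < u \<Longrightarrow> u < (L::nat) \<Longrightarrow> (x + u) mod L \<noteq> x mod L"
proof
  assume u: "0 < u" "u < L" and e: "(x + u) mod L = x mod L"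
  then have "L dvd (x + u) - x" using mod_eq_dvd_iff_nat[of x "x+u" L] by simp
  then have "L dvd u" by simp
  then show False using u by (simp add: nat_dvd_not_less)
qed

lemma lt4: "z<(4::nat) \<Longrightarrow> z = 0 \<or> z=1 \<or> z=2 \<or> z=3" by arith

lemma binary4:
  fixes a b x y z :: nat
  assumes "a < 4" "b < 4" "a \<noteq> b" "x < 4" "y < 4" "z < 4"
    "x \<noteq> a" "x \<noteq> b" "y \<noteq> a" "y \<noteq> b" "z \<noteq> a" "z \<noteq> b" "x \<noteq> y" "y \<noteq> z"
  shows "x = z"
  using lt4[OF assms(1)] lt4[OF assms(2)] lt4[OF assms(4)] lt4[OF assms(5)] lt4[OF assms(6)] assms(3,7-)
  by fastforce



lemma minimal_bad:
  assumes q: "q_ary_matrix 4 m n M" and ab: "a\<noteq>b" and w: "walk m n M a b L R C" and L3: "3 \<le> L"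
    and P1: "\<forall>i<L. \<forall>j<L. M (R i) (C j) = a \<longrightarrow> i = j"
    and P2: "\<forall>i<L. \<forall>j<L. M (R i) (C j) = b \<longrightarrow> j = Suc i mod L"
  shows "BAD m n M"
proof (rule ccontr)
  assume nb: "\<not> BAD m n M"
  define Rp where "Rp k = R (k mod L)" for k
  define Cp where "Cp k = C (k mod L)" for k
  have L0: "0 < L" using L3 by simp
  have W: "\<forall>i<L. R i < m \<and> C i < n \<and> M (R i) (C i) = a \<and> M (R i) (C (Suc i mod L)) = b"
    using w unfolding walk_def by auto
  have Rb: "Rp k < m" for k using W L0 unfolding Rp_def by auto
  have Cb: "Cp k < n" for k using W L0 unfolding Cp_def by auto
  have Mq: "M (Rp i) (Cp j) < 4" for i j using q Rb Cb unfolding q_ary_matrix_def by blast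
  have Fa: "M (Rp i) (Cp i) = a" for i using W L0 unfolding Rp_def Cp_def by auto
  have Fb: "M (Rp i) (Cp (Suc i)) = b" for i
  proof -
    have "M (R (i mod L)) (C (Suc (i mod L) mod L)) = b" using W L0 by auto
    then show ?thesis unfolding Rp_def Cp_def by (simp add: mod_Suc_eq)
  qed
  have a4: "a < 4" using Fa[of 0] Mq[of 0 0] by simp
  have b4: "b < 4" using Fb[of 0] Mq[of 0 1] by simp
  have Fna: "i mod L = j mod L" if "M (Rp i) (Cp j) = a" for i j
    using P1 that L0 unfolding Rp_def Cp_def by auto
  have Fnb: "j mod L = Suc i mod L" if "M (Rp i) (Cp j) = b" for i j
  proof -
    have "j mod L = Suc (i mod L) mod L" using P2 that L0 unfolding Rp_def Cp_def by auto
    then show ?thesis by (simp add: mod_Suc_eq)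
  qed
  have Rne: "Rp i \<noteq> Rp j" if "i mod L \<noteq> j mod L" for i j
  proof
    assume "Rp i = Rp j"
    then have "M (Rp j) (Cp i) = a" using Fa[of i] by simp
    then show False using Fna that by metis
  qed
  have Cne: "Cp i \<noteq> Cp j" if "i mod L \<noteq> j mod L" for i j
  proof
    assume "Cp i = Cp j"
    then have "M (Rp i) (Cp j) = a" using Fa[of i] by simp
    then show False using Fna that by metis
  qed
  have Cper: "Cp (x + L) = Cp x" for x unfolding Cp_def by simp
  have mne: "(x + u) mod L \<noteq> x mod L" if "0 < u" "u < L" for x u using modne that by blast
  define V where "V i t = M (Rp i) (Cp (i+t))" for i t
  have V4: "V i t < 4" for i t unfolding V_def using Mq by simp
  have Va: "V i t \<noteq> a" if "0 < t" "t < L" for i t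
  proof
    assume "V i t = a"
    then have "i mod L = (i+t) mod L" using Fna unfolding V_def by blast
    moreover have "(i+t) mod L \<noteq> i mod L" by (rule mne[OF that])
    ultimately show False by metis
  qed
  have Vb: "V i t \<noteq> b" if "2 \<le> t" "t < L" for i t
  proof
    assume "V i t = b"
    then have "(i+t) mod L = Suc i mod L" using Fnb unfolding V_def by blast
    moreover have "i + t = Suc i + (t - 1)" using that by simp
    moreover have "(Suc i + (t-1)) mod L \<noteq> Suc i mod L" by (rule mne) (use that in auto)
    ultimately show False by metis
  qed
  have bin: "x = z" if "x < 4" "y < 4" "z < 4" "x \<noteq> a" "x \<noteq> b" "y \<noteq> a" "y \<noteq> b" "z \<noteq> a" "z \<noteq> b"
      "x \<noteq> y" "y \<noteq> z" for x y z
    by (rule binary4[OF a4 b4 ab that])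
  have A: "V i t \<noteq> V (i+t) (L-t)" if t: "0 < t" "t < L" for i t
  proof
    assume eq: "V i t = V (i+t) (L-t)"
    have e1: "i + t + (L - t) = i + L" using t by simp
    have "BAD m n M"
    proof (rule switch_bad[of "Rp i" "Rp (i+t)" "Cp i" "Cp (i+t)" m n M a "V i t"])
      show "Rp i \<noteq> Rp (i + t)" using Rne mne[OF t, of i] by metis
      show "Cp i \<noteq> Cp (i + t)" using Cne mne[OF t, of i] by metis
      show "M (Rp (i + t)) (Cp i) = V i t" using eq unfolding V_def e1 Cper by simp
      show "a \<noteq> V i t" using Va[OF t] by metis
    qed (use Rb Cb Fa V4 a4 in \<open>auto simp: V_def\<close>)
    then show False using nb by simp
  qed
  have B: "V i (Suc t) \<noteq> V (i+t) (L-t+1)" if t: "0 < t" "t < L" for i t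
  proof
    assume eq: "V i (Suc t) = V (i+t) (L-t+1)"
    have e1: "i + t + (L - t + 1) = Suc i + L" using t by simp
    have mn: "Suc (i + t) mod L \<noteq> Suc i mod L" using mne[OF t, of "Suc i"] by simp
    have "BAD m n M"
    proof (rule switch_bad[of "Rp i" "Rp (i+t)" "Cp (Suc i)" "Cp (Suc (i+t))" m n M b "V i (Suc t)"])
      show "Rp i \<noteq> Rp (i + t)" using Rne mne[OF t, of i] by metis
      show "Cp (Suc i) \<noteq> Cp (Suc (i + t))" using Cne mn by metis
      show "M (Rp (i + t)) (Cp (Suc i)) = V i (Suc t)" using eq unfolding V_def e1 Cper by simp
      show "M (Rp i) (Cp (Suc (i + t))) = V i (Suc t)" unfolding V_def by simp
      show "b \<noteq> V i (Suc t)"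
      proof
        assume "b = V i (Suc t)"
        then have "Suc (i+t) mod L = Suc i mod L" using Fnb unfolding V_def by (metis add_Suc_right)
        then show False using mn by simp
      qed
    qed (use Rb Cb Fb V4 b4 in \<open>auto\<close>)
    then show False using nb by simp
  qed
  have Cc: "V i 2 \<noteq> V (Suc i) (L-1)" for i
  proof
    assume eq: "V i 2 = V (Suc i) (L-1)"
    have e1: "Suc i + (L - 1) = i + L" using L3 by simp
    have "BAD m n M"
    proof (rule p23_bad[of "Rp i" "Rp (Suc i)" "Cp i" "Cp (Suc i)" "Cp (i+2)" m n M a b "V i 2"])
      show "Rp i \<noteq> Rp (Suc i)" using Rne mne[of 1 i] L3 by force
      show "Cp i \<noteq> Cp (Suc i)" using Cne mne[of 1 i] L3 by force
      show "Cp i \<noteq> Cp (i + 2)" using Cne mne[of 2 i] L3 by force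
      show "Cp (Suc i) \<noteq> Cp (i + 2)" using Cne mne[of 1 "Suc i"] L3 by force
      show "M (Rp (Suc i)) (Cp i) = V i 2" using eq unfolding V_def e1 Cper by simp
      show "M (Rp (Suc i)) (Cp (i + 2)) = b" using Fb[of "Suc i"] by simp
      show "V i 2 \<noteq> a" using Va L3 by simp
    qed (use Rb Cb Fa Fb V4 Mq a4 b4 in \<open>auto simp: V_def\<close>)
    then show False using nb by simp
  qed
  have Cc': "V i 2 \<noteq> V (i+2) (L-1)" for i
  proof
    assume eq: "V i 2 = V (i+2) (L-1)"
    have e1: "i + 2 + (L - 1) = Suc i + L" using L3 by simp
    have "BAD m n M"
    proof (rule p32_bad[of "Rp i" "Rp (Suc i)" "Rp (i+2)" "Cp (Suc i)" "Cp (i+2)" m n M b "V i 2" a])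
      show "Rp i \<noteq> Rp (Suc i)" using Rne mne[of 1 i] L3 by force
      show "Rp i \<noteq> Rp (i+2)" using Rne mne[of 2 i] L3 by force
      show "Rp (Suc i) \<noteq> Rp (i + 2)" using Rne mne[of 1 "Suc i"] L3 by force
      show "Cp (Suc i) \<noteq> Cp (i + 2)" using Cne mne[of 1 "Suc i"] L3 by force
      show "M (Rp (i+2)) (Cp (Suc i)) = V i 2" using eq unfolding V_def e1 Cper by simp
      show "M (Rp (Suc i)) (Cp (i + 2)) = b" using Fb[of "Suc i"] by simp
      show "V i 2 \<noteq> b" using Vb L3 by simp
    qed (use Rb Cb Fa Fb V4 Mq a4 b4 in \<open>auto simp: V_def\<close>)
    then show False using nb by simp
  qed
  define K where "K i = V (Suc i) (L-1)" for i
  have KS: "K (Suc i) = K i" for i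
  proof -
    have t: "2 \<le> L - 1" "L - 1 < L" using L3 by auto
    have "V (i+2) (L-1) = V (Suc i) (L-1)"
    proof (rule bin[of _ "V i 2"])
      show "V (i + 2) (L - 1) \<noteq> V i 2" using Cc'[of i] by metis
    qed (use V4 Va Vb t Cc[of i] L3 in auto)
    then show ?thesis unfolding K_def by simp
  qed
  have K0: "K i = K 0" for i by (induction i) (use KS in auto)
  have claim: "\<forall>i. V i t \<noteq> K 0" if "2 \<le> t" "t < L" for t
    using that
  proof (induction t rule: less_induct)
    case (less t)
    show ?case
    proof
      fix i
      consider "t = 2" | "t = 3" | "4 \<le> t" using less.prems by linarith
      then show "V i t \<noteq> K 0"
      proof cases
        case 1 then show ?thesis using Cc[of i] K0[of i] unfolding K_def by simp
      next
        case 2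
        have "V i (Suc 2) \<noteq> V (i+2) (L-2+1)" using B[of 2 i] less.prems 2 by simp
        moreover have "L - 2 + 1 = L - 1" using L3 by simp
        moreover have "V (i+2) (L-1) = K 0" using K0[of "Suc i"] unfolding K_def by simp
        ultimately show ?thesis using 2 by (simp add: numeral_3_eq_3)
      next
        case 3
        have h1: "V (Suc i) (t-2) \<noteq> V (Suc i + (t-2)) (L-(t-2))" using A[of "t-2" "Suc i"] 3 less.prems by simp
        have h2: "V i (Suc (t-1)) \<noteq> V (i+(t-1)) (L-(t-1)+1)" using B[of "t-1" i] 3 less.prems by simp
        have e1: "Suc i + (t-2) = i + (t-1)" "L-(t-2) = L-(t-1)+1" "Suc (t-1) = t" using 3 less.prems by auto
        have "V i t = V (Suc i) (t-2)"
        proof (rule bin[of _ "V (i+(t-1)) (L-(t-1)+1)"])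
          show "V i t \<noteq> V (i + (t - 1)) (L - (t - 1) + 1)" using h2 e1 by simp
          show "V (i + (t - 1)) (L - (t - 1) + 1) \<noteq> V (Suc i) (t - 2)" using h1 e1 by metis
        qed (use V4 Va Vb 3 less.prems in auto)
        moreover have "V (Suc i) (t-2) \<noteq> K 0" using less.IH[of "t-2"] 3 less.prems by auto
        ultimately show ?thesis by simp
      qed
    qed
  qed
  have "V (Suc 0) (L-1) \<noteq> K 0" using claim[of "L-1"] L3 by auto
  then show False unfolding K_def by simp
qed



lemma main_walk:
  assumes "q_ary_matrix 4 m n M" "a \<noteq> b" "walk m n M a b L R C"
  shows "BAD m n M"
  using assms
proof (induction L arbitrary: R C rule: less_induct)
  case (less L)
  note q = less.prems(1) and ab = less.prems(2) and w = less.prems(3)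
  show ?case
  proof (rule ccontr)
    assume nb: "\<not> BAD m n M"
    have IH: False if "l < L" "walk m n M a b l R' C'" for l R' C'
      using less.IH[OF that(1) q ab that(2)] nb by simp
    have L2: "2 \<le> L" and W: "\<forall>i<L. R i < m \<and> C i < n \<and> M (R i) (C i) = a \<and> M (R i) (C (Suc i mod L)) = b"
      using w unfolding walk_def by auto
    have P1: "\<forall>i<L. \<forall>j<L. M (R i) (C j) = a \<longrightarrow> i = j"
    proof (intro allI impI)
      fix i j assume i: "i < L" and j: "j < L" and v: "M (R i) (C j) = a"
      show "i = j"
      proof (rule ccontr)
        assume ij: "i \<noteq> j"
        define j' where "j' = (j + L - i) mod L"
        have j'L: "j' < L" unfolding j'_def using L2 by simp
        have j'0: "0 < j'"
        proof (cases "i \<le> j")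
          case True
          then have "j + L - i = (j - i) + L" by simp
          then have "j' = ((j - i) + L) mod L" unfolding j'_def by (simp only:)
          also have "\<dots> = j - i" using j by simp
          finally have "j' = j - i" .
          then show ?thesis using True ij by simp
        next
          case False
          then have "j + L - i < L" using i by simp
          then have "j' = j + L - i" unfolding j'_def by (rule mod_less)
          then show ?thesis using False i by simp
        qed
        have e: "(j' + i) mod L = j"
        proof -
          have "(j' + i) mod L = (j + L - i + i) mod L" unfolding j'_def by (rule mod_add_left_eq)
          also have "j + L - i + i = j + L" using i by simp
          also have "(j + L) mod L = j" using j by simp
          finally show ?thesis .
        qed
        have w': "walk m n M a b L (\<lambda>t. R ((t+i) mod L)) (\<lambda>t. C ((t+i) mod L))"
          by (rule walk_rot[OF w])
        have v': "M ((\<lambda>t. R ((t+i) mod L)) 0) ((\<lambda>t. C ((t+i) mod L)) j') = a"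
          using v i by (simp only: e) simp
        show False using IH[OF j'L walk_short_a[OF w' j'0 j'L v' ab]] .
      qed
    qed
    have P2: "\<forall>i<L. \<forall>j<L. M (R i) (C j) = b \<longrightarrow> j = Suc i mod L"
    proof (intro allI impI)
      fix i j assume i: "i < L" and j: "j < L" and v: "M (R i) (C j) = b"
      show "j = Suc i mod L"
      proof (rule ccontr)
        assume ij: "j \<noteq> Suc i mod L"
        have ne: "i \<noteq> j" using W v ab i by auto
        define i' where "i' = (i + L - j) mod L"
        have i'L: "i' < L" unfolding i'_def using L2 by simp
        have e: "(i' + j) mod L = i"
        proof -
          have "(i' + j) mod L = (i + L - j + j) mod L" unfolding i'_def by (rule mod_add_left_eq)
          also have "i + L - j + j = i + L" using j by simp
          also have "(i + L) mod L = i" using i by simp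
          finally show ?thesis .
        qed
        have i'0: "0 < i'"
        proof (rule ccontr)
          assume "\<not> 0 < i'"
          then have "i' = 0" by simp
          then show False using e ne j by simp
        qed
        have i'S: "Suc i' < L"
        proof (rule ccontr)
          assume "\<not> Suc i' < L"
          then have "Suc i' = L" using i'L by simp
          then have "Suc i mod L = Suc ((i' + j) mod L) mod L" using e by simp
          also have "\<dots> = Suc (i' + j) mod L" by (simp add: mod_Suc_eq)
          also have "Suc (i' + j) = j + L" using \<open>Suc i' = L\<close> by simp
          finally have "Suc i mod L = j" using j by simp
          then show False using ij by simp
        qed
        have w': "walk m n M a b L (\<lambda>t. R ((t+j) mod L)) (\<lambda>t. C ((t+j) mod L))"
          by (rule walk_rot[OF w])
        have v': "M ((\<lambda>t. R ((t+j) mod L)) i') ((\<lambda>t. C ((t+j) mod L)) 0) = b"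
          using v e j by simp
        show False using IH[OF i'S walk_short_b[OF w' i'0 i'S v']] .
      qed
    qed
    show False
    proof (cases "L = 2")
      case True
      have W0: "R 0 < m \<and> C 0 < n \<and> M (R 0) (C 0) = a \<and> M (R 0) (C (Suc 0 mod L)) = b"
        using W True by (metis zero_less_numeral)
      have W1: "R 1 < m \<and> C 1 < n \<and> M (R 1) (C 1) = a \<and> M (R 1) (C (Suc 1 mod L)) = b"
        using W True by (metis one_less_numeral_iff semiring_norm(76))
      have m1: "Suc 0 mod L = 1" "Suc 1 mod L = 0" using True by auto
      have w0: "R 0 < m" "C 0 < n" "M (R 0) (C 0) = a" "M (R 0) (C 1) = b"
        using W0 m1 by auto
      have w1: "R 1 < m" "C 1 < n" "M (R 1) (C 1) = a" "M (R 1) (C 0) = b"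
        using W1 m1 by auto
      have "BAD m n M"
      proof (rule switch_bad[of "R 0" "R 1" "C 0" "C 1" m n M a b])
        show "R 0 \<noteq> R 1" using w0 w1 ab by metis
        show "C 0 \<noteq> C 1" using w0 w1 ab by metis
        show "a < 4" using q w0 unfolding q_ary_matrix_def by metis
        show "b < 4" using q w0 w1 unfolding q_ary_matrix_def by metis
      qed (use w0 w1 ab in auto)
      then show False using nb by simp
    next
      case False
      then have "3 \<le> L" using L2 by simp
      then show False using minimal_bad[OF q ab w _ P1 P2] nb by simp
    qed
  qed
qed



theorem theorem3p10:
  fixes m n :: nat and M :: "nat \<Rightarrow> nat \<Rightarrow> nat" and ps :: "(nat \<times> nat) list"
  assumes "q_ary_matrix 4 m n M"
    and "is_cycle m n M ps"
    and "length ps \<ge> 6"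
  shows "\<exists>rs cs. valid_sub_indices m n rs cs \<and>
           (length rs, length cs) \<in> {(2,2), (2,3), (3,2)} \<and>
           \<not> weak_lonesum 4 (length rs) (length cs) (submatrix M rs cs)"
proof -
  note q = assms(1)
  define k where "k = length ps"
  define qs where "qs = ps @ [ps!0, ps!1]"
  have k6: "6 \<le> k" using assms(3) k_def by simp
  have pth: "is_path m n M ps" and pc: "path_conds M qs"
    using assms(2) unfolding is_cycle_def qs_def by auto
  have inr: "\<forall>p\<in>set ps. fst p < m \<and> snd p < n" using pth unfolding is_path_def by auto
  have lq: "length qs = k + 2" unfolding qs_def k_def by simp
  have qlt: "qs!l = ps!l" if "l < k" for l unfolding qs_def using that k_def by (simp add: nth_append)
  have qk: "qs!k = qs!0" "qs!(Suc k) = qs!1"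
    unfolding qs_def k_def using k6 k_def by (auto simp: nth_append)
  have qin: "fst (qs!l) < m \<and> snd (qs!l) < n" if "l < k + 2" for l
  proof -
    have "qs!l \<in> set qs" using that lq by simp
    moreover have "ps!0 \<in> set ps" "ps!1 \<in> set ps" using k6 k_def by (auto intro!: nth_mem)
    then have "set qs = set ps" unfolding qs_def by auto
    ultimately show ?thesis using inr by auto
  qed
  have c1: "\<forall>l. l + 1 < k + 2 \<longrightarrow> fst (qs!l) = fst (qs!(l+1)) \<or> snd (qs!l) = snd (qs!(l+1))"
    and c2: "\<forall>l. l + 2 < k + 2 \<longrightarrow>
        card {fst (qs!l), fst (qs!(l+1)), fst (qs!(l+2))} \<ge> 2 \<and>
        card {snd (qs!l), snd (qs!(l+1)), snd (qs!(l+2))} \<ge> 2"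
    using pc lq unfolding path_conds_def by auto
  obtain a b where ab: "a \<noteq> b" and c3: "\<forall>l<k+2. M (fst (qs!l)) (snd (qs!l)) = (if even l then a else b)"
    using pc lq unfolding path_conds_def by auto
  have alt1: "snd (qs!(l+1)) = snd (qs!(l+2))" if "l + 2 < k + 2" "fst (qs!l) = fst (qs!(l+1))" for l
  proof -
    have "fst (qs!(l+1)) \<noteq> fst (qs!(l+2))"
    proof
      assume "fst (qs!(l+1)) = fst (qs!(l+2))"
      then have "{fst (qs!l), fst (qs!(l+1)), fst (qs!(l+2))} = {fst (qs!l)}" using that(2) by auto
      then show False using c2 that(1) by fastforce
    qed
    then show ?thesis using c1 that(1) by (metis add_Suc_right less_SucI add_2_eq_Suc' Suc_eq_plus1 one_add_one)
  qed
  have alt2: "fst (qs!(l+1)) = fst (qs!(l+2))" if "l + 2 < k + 2" "snd (qs!l) = snd (qs!(l+1))" for l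
  proof -
    have "snd (qs!(l+1)) \<noteq> snd (qs!(l+2))"
    proof
      assume "snd (qs!(l+1)) = snd (qs!(l+2))"
      then have "{snd (qs!l), snd (qs!(l+1)), snd (qs!(l+2))} = {snd (qs!l)}" using that(2) by auto
      then show False using c2 that(1) by fastforce
    qed
    then show ?thesis using c1 that(1) by (metis add_Suc_right less_SucI add_2_eq_Suc' Suc_eq_plus1 one_add_one)
  qed
  have ek: "even k"
  proof (rule ccontr)
    assume "odd k"
    then have "M (fst (qs!k)) (snd (qs!k)) = b" using c3 by simp
    moreover have "M (fst (qs!0)) (snd (qs!0)) = a" using c3 by simp
    ultimately show False using qk ab by simp
  qed
  define L where "L = k div 2"
  have kL: "k = 2 * L" using ek L_def by simp
  have BADM: "BAD m n M"
  proof (cases "fst (qs!0) = fst (qs!1)")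
    case True
    have st: "(even l \<longrightarrow> fst (qs!l) = fst (qs!(l+1))) \<and> (odd l \<longrightarrow> snd (qs!l) = snd (qs!(l+1)))"
      if "l < k + 1" for l
      using that
    proof (induction l)
      case 0 then show ?case using True by simp
    next
      case (Suc l)
      then have h: "(even l \<longrightarrow> fst (qs!l) = fst (qs!(l+1))) \<and> (odd l \<longrightarrow> snd (qs!l) = snd (qs!(l+1)))" by simp
      have l2: "l + 2 < k + 2" using Suc.prems by simp
      show ?case
      proof (cases "even l")
        case True
        then have "snd (qs!(l+1)) = snd (qs!(l+2))" using alt1[OF l2] h by simp
        then show ?thesis using True by simp
      next
        case False
        then have "fst (qs!(l+1)) = fst (qs!(l+2))" using alt2[OF l2] h by simp
        then show ?thesis using False by simp
      qed
    qed
    define R where "R i = fst (qs!(2*i))" for i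
    define C where "C i = snd (qs!(2*i))" for i
    have "walk m n M a b L R C"
      unfolding walk_def
    proof (intro conjI allI impI)
      show "2 \<le> L" using k6 kL by simp
      fix i assume i: "i < L"
      show "R i < m" "C i < n" unfolding R_def C_def using qin[of "2*i"] i kL by auto
      show "M (R i) (C i) = a" unfolding R_def C_def using c3 i kL by simp
      have s1: "fst (qs!(2*i)) = fst (qs!(2*i+1))" using st[of "2*i"] i kL by simp
      have s2: "snd (qs!(2*i+1)) = snd (qs!(2*i+2))" using st[of "2*i+1"] i kL by simp
      have s3: "snd (qs!(2*i+2)) = C (Suc i mod L)"
      proof (cases "Suc i < L")
        case True then show ?thesis unfolding C_def by simp
      next
        case False
        then have "Suc i = L" using i by simp
        then have "2*i+2 = k" "Suc i mod L = 0" using kL by auto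
        then show ?thesis unfolding C_def using qk by simp
      qed
      have "M (fst (qs!(2*i+1))) (snd (qs!(2*i+1))) = b" using c3 i kL by simp
      then show "M (R i) (C (Suc i mod L)) = b" unfolding R_def using s1 s2 s3 by simp
    qed
    then show ?thesis using main_walk[OF q ab] by blast
  next
    case False
    then have F0: "snd (qs!0) = snd (qs!1)" using c1 by (metis One_nat_def add_0 add_less_mono1 lq add_2_eq_Suc' zero_less_Suc k6 Suc_eq_plus1 le_add2 less_le_trans numeral_2_eq_2 One_nat_def)
    have st: "(even l \<longrightarrow> snd (qs!l) = snd (qs!(l+1))) \<and> (odd l \<longrightarrow> fst (qs!l) = fst (qs!(l+1)))"
      if "l < k + 1" for l
      using that
    proof (induction l)
      case 0 then show ?case using F0 by simp
    next
      case (Suc l)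
      then have h: "(even l \<longrightarrow> snd (qs!l) = snd (qs!(l+1))) \<and> (odd l \<longrightarrow> fst (qs!l) = fst (qs!(l+1)))" by simp
      have l2: "l + 2 < k + 2" using Suc.prems by simp
      show ?case
      proof (cases "even l")
        case True
        then have "fst (qs!(l+1)) = fst (qs!(l+2))" using alt2[OF l2] h by simp
        then show ?thesis using True by simp
      next
        case False
        then have "snd (qs!(l+1)) = snd (qs!(l+2))" using alt1[OF l2] h by simp
        then show ?thesis using False by simp
      qed
    qed
    define R where "R i = fst (qs!(2*i+1))" for i
    define C where "C i = snd (qs!(2*i+1))" for i
    have "walk m n M b a L R C"
      unfolding walk_def
    proof (intro conjI allI impI)
      show "2 \<le> L" using k6 kL by simp
      fix i assume i: "i < L"
      show "R i < m" "C i < n" unfolding R_def C_def using qin[of "2*i+1"] i kL by auto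
      show "M (R i) (C i) = b" unfolding R_def C_def using c3 i kL by simp
      have s1: "fst (qs!(2*i+1)) = fst (qs!(2*i+2))" using st[of "2*i+1"] i kL by simp
      have s2: "snd (qs!(2*i+2)) = snd (qs!(2*i+2+1))" using st[of "2*i+2"] i kL by simp
      have s3: "snd (qs!(2*i+2+1)) = C (Suc i mod L)"
      proof (cases "Suc i < L")
        case True
        have "2*i+2+1 = 2 * Suc i + 1" by simp
        then show ?thesis unfolding C_def using True by simp
      next
        case False
        then have "Suc i = L" using i by simp
        then have "2*i+2+1 = Suc k" "Suc i mod L = 0" using kL by auto
        then show ?thesis unfolding C_def using qk by simp
      qed
      have "M (fst (qs!(2*i+2))) (snd (qs!(2*i+2))) = a" using c3 i kL by simp
      then show "M (R i) (C (Suc i mod L)) = a" unfolding R_def using s1 s2 s3 by simp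
    qed
    then show ?thesis using main_walk[OF q ab[symmetric]] by blast
  qed
  then show ?thesis unfolding BAD_def .
qed

end
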